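(* Let $k\ge 1$ and $n>\binom{k}{2}$. If $F_1,\ldots,F_k$ are subgraphs (sets of edges) of the complete bipartite graph $K_{n,n}$ satisfying $|F_i|\ge in$ for all $i\le k$, then $(F_1,\ldots,F_k)$ has a rainbow matching, i.e. there exist pairwise disjoint edges $e_1,\ldots,e_k$ with $e_i\in F_i$ for each $i$.
   Context: A rainbow matching for $(F_1,\ldots,F_k)$ is a choice of pairwise disjoint edges $e_i\in F_i$, one from each $F_i$. *)

theory Defs
  imports Main
begin

text \<open>Edges of the complete bipartite graph K_{n,n}: pairs (a,b) with a a left vertex
  and b a right vertex, both sides indexed by {0..<n}.\<close>
definition bip_edges :: "nat \<Rightarrow> (nat \<times> nat) set" where
  "bip_edges n = {0..<n} \<times> {0..<n}"

definition edges_disjoint :: "nat \<times> nat \<Rightarrow> nat \<times> nat \<Rightarrow> bool" where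
  "edges_disjoint e f \<longleftrightarrow> fst e \<noteq> fst f \<and> snd e \<noteq> snd f"

definition rainbow_matching :: "nat \<Rightarrow> (nat \<Rightarrow> (nat \<times> nat) set) \<Rightarrow> (nat \<Rightarrow> nat \<times> nat) \<Rightarrow> bool" where
  "rainbow_matching k F e \<longleftrightarrow>
     (\<forall>i\<in>{1..k}. e i \<in> F i) \<and>
     (\<forall>i\<in>{1..k}. \<forall>j\<in>{1..k}. i \<noteq> j \<longrightarrow> edges_disjoint (e i) (e j))"

end

theory Submission
  imports Defs
begin

lemma card_rows_sum:
  assumes "F \<subseteq> bip_edges n"
  shows "card F = (\<Sum>v\<in>{0..<n}. card {b. (v,b) \<in> F})"
proof -
  have "F = Sigma {0..<n} (\<lambda>v. {b. (v,b) \<in> F})"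
    using assms unfolding bip_edges_def by auto
  moreover have "card (Sigma {0..<n} (\<lambda>v. {b. (v,b) \<in> F})) = (\<Sum>v\<in>{0..<n}. card {b. (v,b) \<in> F})"
  proof (rule card_SigmaI)
    show "finite {0..<n}" by simp
    show "\<forall>a\<in>{0..<n}. finite {b. (a, b) \<in> F}"
    proof
      fix a assume "a \<in> {0..<n}"
      have "{b. (a, b) \<in> F} \<subseteq> {0..<n}" using assms unfolding bip_edges_def by auto
      then show "finite {b. (a, b) \<in> F}" using finite_subset by blast
    qed
  qed
  ultimately show ?thesis by simp
qed

lemma card_row_le:
  assumes "F \<subseteq> bip_edges n"
  shows "card {b. (v,b) \<in> F} \<le> n"
proof -
  have "{b. (v, b) \<in> F} \<subseteq> {0..<n}" using assms unfolding bip_edges_def by auto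
  then show ?thesis using card_mono[of "{0..<n}"] by fastforce
qed

lemma card_remove_row:
  assumes "finite F"
  shows "card F \<le> card (F - {e. fst e = v}) + card {b. (v,b) \<in> F}"
proof -
  have fin: "finite {b. (v,b) \<in> F}"
  proof -
    have "{b. (v,b) \<in> F} = snd ` (F \<inter> {e. fst e = v})" by force
    then show ?thesis using assms by simp
  qed
  have "F \<subseteq> (F - {e. fst e = v}) \<union> ({v} \<times> {b. (v,b) \<in> F})" by auto
  then have "card F \<le> card ((F - {e. fst e = v}) \<union> ({v} \<times> {b. (v,b) \<in> F}))"
    using assms fin by (intro card_mono) auto
  also have "\<dots> \<le> card (F - {e. fst e = v}) + card ({v} \<times> {b. (v,b) \<in> F})"
    by (rule card_Un_le)
  also have "card ({v} \<times> {b. (v,b) \<in> F}) = card {b. (v,b) \<in> F}"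
    by (simp add: card_cartesian_product_singleton)
  finally show ?thesis .
qed

lemma choose2_Suc: "Suc m choose 2 = (m choose 2) + m"
  by (simp add: numeral_2_eq_2)

lemma main:
  "\<And>D F. (k choose 2) + 1 + D \<le> n \<Longrightarrow> (\<forall>i\<in>{1..k}. F i \<subseteq> bip_edges n) \<Longrightarrow>
     (\<forall>i\<in>{1..k}. i * n \<le> card (F i) + D) \<Longrightarrow> \<exists>e. rainbow_matching k F e"
proof (induction k)
  case 0
  then show ?case unfolding rainbow_matching_def by auto
next
  case (Suc m)
  fix D F
  assume hn: "(Suc m choose 2) + 1 + D \<le> n"
    and hsub: "\<forall>i\<in>{1..Suc m}. F i \<subseteq> bip_edges n"
    and hcard: "\<forall>i\<in>{1..Suc m}. i * n \<le> card (F i) + D"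
  have finF: "\<And>i. i \<in> {1..Suc m} \<Longrightarrow> finite (F i)"
  proof -
    fix i assume "i \<in> {1..Suc m}"
    then have "F i \<subseteq> bip_edges n" using hsub by blast
    moreover have "finite (bip_edges n)" unfolding bip_edges_def by simp
    ultimately show "finite (F i)" using finite_subset by blast
  qed
  define P where "P j \<longleftrightarrow> (\<exists>v. Suc m \<le> card {b. (v,b) \<in> F j})" for j
  have PSm: "P (Suc m)"
  proof (rule ccontr)
    assume "\<not> P (Suc m)"
    then have le: "\<And>v. card {b. (v,b) \<in> F (Suc m)} \<le> m" unfolding P_def using not_less_eq_eq by blast
    have "card (F (Suc m)) = (\<Sum>v\<in>{0..<n}. card {b. (v,b) \<in> F (Suc m)})"
      using hsub by (intro card_rows_sum) auto
    also have "\<dots> \<le> (\<Sum>v\<in>{0..<n}. m)" by (intro sum_mono le)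
    also have "\<dots> = n * m" by simp
    finally have "card (F (Suc m)) \<le> n * m" .
    moreover have "Suc m * n \<le> card (F (Suc m)) + D" using hcard[rule_format, of "Suc m"] by simp
    ultimately have "n \<le> D" by (simp add: algebra_simps)
    with hn show False by simp
  qed
  define j where "j = (LEAST j. 1 \<le> j \<and> P j)"
  have j1: "1 \<le> j \<and> P j" unfolding j_def
    by (rule LeastI[of _ "Suc m"]) (use PSm in auto)
  have jle: "j \<le> Suc m" unfolding j_def
    by (rule Least_le) (use PSm in auto)
  have notP: "\<And>i. 1 \<le> i \<Longrightarrow> i < j \<Longrightarrow> \<not> P i"
    unfolding j_def using not_less_Least by blast
  obtain v where v: "Suc m \<le> card {b. (v,b) \<in> F j}" using j1 unfolding P_def by blast
  define G where "G s = (if s < j then F s else F (Suc s)) - {e. fst e = v}" for s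
  have hn': "(m choose 2) + 1 + (D + m) \<le> n" using hn by (simp add: choose2_Suc)
  have gsub: "\<forall>s\<in>{1..m}. G s \<subseteq> bip_edges n"
  proof
    fix s assume s: "s \<in> {1..m}"
    show "G s \<subseteq> bip_edges n"
    proof (cases "s < j")
      case True
      then have "F s \<subseteq> bip_edges n" using hsub s by auto
      then show ?thesis unfolding G_def using True by auto
    next
      case False
      then have "F (Suc s) \<subseteq> bip_edges n" using hsub s by auto
      then show ?thesis unfolding G_def using False by auto
    qed
  qed
  have gcard: "\<forall>s\<in>{1..m}. s * n \<le> card (G s) + (D + m)"
  proof
    fix s assume s: "s \<in> {1..m}"
    show "s * n \<le> card (G s) + (D + m)"
    proof (cases "s < j")
      case True
      have "\<not> P s" using notP True s by auto
      then have r: "card {b. (v,b) \<in> F s} \<le> m" unfolding P_def using not_less_eq_eq by blast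
      have "card (F s) \<le> card (F s - {e. fst e = v}) + card {b. (v,b) \<in> F s}"
        using finF s by (intro card_remove_row) auto
      moreover have "s * n \<le> card (F s) + D" using hcard s by auto
      moreover have "G s = F s - {e. fst e = v}" unfolding G_def using True by simp
      ultimately have "card (F s) \<le> card (G s) + m" using r by simp
      then show ?thesis using \<open>s * n \<le> card (F s) + D\<close> by linarith
    next
      case False
      have r: "card {b. (v,b) \<in> F (Suc s)} \<le> n"
        using hsub s by (intro card_row_le) auto
      have "card (F (Suc s)) \<le> card (F (Suc s) - {e. fst e = v}) + card {b. (v,b) \<in> F (Suc s)}"
        using finF s by (intro card_remove_row) auto
      moreover have "Suc s * n \<le> card (F (Suc s)) + D" using hcard[rule_format, of "Suc s"] s by simp
      moreover have "G s = F (Suc s) - {e. fst e = v}" unfolding G_def using False by simp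
      ultimately have "card (F (Suc s)) \<le> card (G s) + n" using r by simp
      then show ?thesis using \<open>Suc s * n \<le> card (F (Suc s)) + D\<close> by simp
    qed
  qed
  obtain e' where rm: "rainbow_matching m G e'" using Suc.IH[OF hn' gsub gcard] by blast
  have e'G: "\<And>s. s \<in> {1..m} \<Longrightarrow> e' s \<in> G s" using rm unfolding rainbow_matching_def by blast
  have e'd: "\<And>s s'. s \<in> {1..m} \<Longrightarrow> s' \<in> {1..m} \<Longrightarrow> s \<noteq> s' \<Longrightarrow> edges_disjoint (e' s) (e' s')"
    using rm unfolding rainbow_matching_def by blast
  have fstv: "\<And>s. s \<in> {1..m} \<Longrightarrow> fst (e' s) \<noteq> v" using e'G unfolding G_def by auto
  define Im where "Im = (\<lambda>s. snd (e' s)) ` {1..m}"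
  have cIm: "card Im \<le> m" unfolding Im_def using card_image_le[of "{1..m}"] by simp
  have "\<not> {b. (v,b) \<in> F j} \<subseteq> Im"
  proof
    assume "{b. (v,b) \<in> F j} \<subseteq> Im"
    then have "card {b. (v,b) \<in> F j} \<le> card Im" unfolding Im_def by (intro card_mono) auto
    with v cIm show False by simp
  qed
  then obtain u where u1: "(v,u) \<in> F j" and u2: "u \<notin> Im" by blast
  define \<sigma> where "\<sigma> i = (if i < j then i else i - 1)" for i :: nat
  define e where "e i = (if i = j then (v,u) else e' (\<sigma> i))" for i
  have sig: "\<And>i. i \<in> {1..Suc m} \<Longrightarrow> i \<noteq> j \<Longrightarrow> \<sigma> i \<in> {1..m}"
    unfolding \<sigma>_def using j1 jle by auto
  have sigF: "\<And>i. i \<in> {1..Suc m} \<Longrightarrow> i \<noteq> j \<Longrightarrow> G (\<sigma> i) \<subseteq> F i"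
    unfolding \<sigma>_def G_def using j1 by auto
  have sigi: "\<And>i i'. i \<noteq> j \<Longrightarrow> i' \<noteq> j \<Longrightarrow> i \<noteq> i' \<Longrightarrow> \<sigma> i \<noteq> \<sigma> i'"
    unfolding \<sigma>_def using j1 by auto
  have dj: "\<And>i. i \<in> {1..Suc m} \<Longrightarrow> i \<noteq> j \<Longrightarrow> edges_disjoint (e j) (e i)"
  proof -
    fix i assume i: "i \<in> {1..Suc m}" "i \<noteq> j"
    have "fst (e' (\<sigma> i)) \<noteq> v" using fstv sig i by blast
    moreover have "snd (e' (\<sigma> i)) \<noteq> u" using u2 sig i unfolding Im_def by blast
    ultimately show "edges_disjoint (e j) (e i)"
      unfolding e_def edges_disjoint_def using i by auto
  qed
  have "rainbow_matching (Suc m) F e"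
    unfolding rainbow_matching_def
  proof (intro conjI ballI impI)
    fix i assume i: "i \<in> {1..Suc m}"
    show "e i \<in> F i"
    proof (cases "i = j")
      case True then show ?thesis using u1 unfolding e_def by simp
    next
      case False
      then have "e' (\<sigma> i) \<in> G (\<sigma> i)" using e'G sig i by blast
      then show ?thesis using sigF i False unfolding e_def by auto
    qed
  next
    fix i i' assume i: "i \<in> {1..Suc m}" and i': "i' \<in> {1..Suc m}" and ne: "i \<noteq> i'"
    show "edges_disjoint (e i) (e i')"
    proof (cases "i = j")
      case True then show ?thesis using dj i' ne by auto
    next
      case False
      show ?thesis
      proof (cases "i' = j")
        case True
        then have "edges_disjoint (e j) (e i)" using dj i False by auto
        then show ?thesis using True unfolding edges_disjoint_def by auto
      next
        case False2: False
        have "edges_disjoint (e' (\<sigma> i)) (e' (\<sigma> i'))"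
          using e'd sig sigi i i' False False2 ne by blast
        then show ?thesis unfolding e_def using False False2 by simp
      qed
    qed
  qed
  then show "\<exists>e. rainbow_matching (Suc m) F e" by blast
qed

theorem theorem10p3:
  fixes k n :: nat and F :: "nat \<Rightarrow> (nat \<times> nat) set"
  assumes "k \<ge> 1" and "n > k choose 2"
    and "\<forall>i\<in>{1..k}. F i \<subseteq> bip_edges n"
    and "\<forall>i\<in>{1..k}. card (F i) \<ge> i * n"
  shows "\<exists>e. rainbow_matching k F e"
  using main[of k 0 n F] assms by auto

end
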